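(* Let $A$ be a finite set with $|A|\ge 2$, $n\ge 2$, and let $\mathcal{I}\subseteq\mathrm{Sym}(A^n)$ be the set of instructions. Then the set of permutations $f\in\mathrm{Sym}(A^n)$ such that $f^{-1}gf\in\mathcal{I}$ for every $g\in\mathcal{I}$ is exactly the group $U$ of unary permutations of $A^n$, which equals $\mathrm{Sym}(A)\wr\mathrm{Sym}(n)$. In other words, $U$ is the largest subgroup of $\mathrm{Sym}(A^n)$ acting on $\mathcal{I}$ by conjugation.
   Context: Any $f\in\mathrm{Sym}(A^n)$ is written $f(x)=(f_1(x),\ldots,f_n(x))$ with coordinate functions $f_i:A^n\to A$; the $i$-th coordinate function is trivial if $f_i(x)=x_i$ for all $x$. An instruction is a permutation of $A^n$ with at most one nontrivial coordinate function (the identity counts as an instruction). A permutation $f$ of $A^n$ is unary if each coordinate function $f_i$ depends on at most one variable. The wreath product $\mathrm{Sym}(A)\wr\mathrm{Sym}(n)$ acts on $A^n$ by permuting coordinates and applying permutations of $A$ independently in each coordinate. *)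

theory Defs
  imports "HOL-Library.FuncSet" "HOL-Combinatorics.Permutations"
begin

text \<open>The cube A^n: tuples are functions nat => 'a, with coordinates 0..n-1 in A
  and value undefined outside (PiE).\<close>
definition cube :: "'a set \<Rightarrow> nat \<Rightarrow> (nat \<Rightarrow> 'a) set" where
  "cube A n = PiE {..<n} (\<lambda>_. A)"

definition sym_cube :: "'a set \<Rightarrow> nat \<Rightarrow> ((nat \<Rightarrow> 'a) \<Rightarrow> (nat \<Rightarrow> 'a)) set" where
  "sym_cube A n = {f. f permutes cube A n}"

definition instructions :: "'a set \<Rightarrow> nat \<Rightarrow> ((nat \<Rightarrow> 'a) \<Rightarrow> (nat \<Rightarrow> 'a)) set" where
  "instructions A n = {g \<in> sym_cube A n.
     card {i \<in> {..<n}. \<not> (\<forall>x \<in> cube A n. g x i = x i)} \<le> 1}"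

definition unary_perms :: "'a set \<Rightarrow> nat \<Rightarrow> ((nat \<Rightarrow> 'a) \<Rightarrow> (nat \<Rightarrow> 'a)) set" where
  "unary_perms A n = {f \<in> sym_cube A n. \<forall>i<n. \<exists>j<n.
     \<forall>x \<in> cube A n. \<forall>y \<in> cube A n. x j = y j \<longrightarrow> f x i = f y i}"

definition wreath_perms :: "'a set \<Rightarrow> nat \<Rightarrow> ((nat \<Rightarrow> 'a) \<Rightarrow> (nat \<Rightarrow> 'a)) set" where
  "wreath_perms A n = {f. \<exists>\<pi> \<sigma>. \<pi> permutes {..<n} \<and> (\<forall>i<n. \<sigma> i permutes A) \<and>
     (\<forall>x. f x = (if x \<in> cube A n
                   then (\<lambda>i. if i < n then \<sigma> i (x (\<pi> i)) else undefined)
                   else x))}"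

end

theory Submission
  imports Defs
begin

lemma cube_eqI: "x \<in> cube A n \<Longrightarrow> y \<in> cube A n \<Longrightarrow> (\<And>k. k<n \<Longrightarrow> x k = y k) \<Longrightarrow> x = y"
  unfolding cube_def by (rule PiE_ext) auto

lemma cube_coord: "x \<in> cube A n \<Longrightarrow> k<n \<Longrightarrow> x k \<in> A"
  unfolding cube_def by auto

lemma cube_out: "x \<in> cube A n \<Longrightarrow> \<not> k<n \<Longrightarrow> x k = undefined"
  unfolding cube_def by (auto simp: PiE_def extensional_def)

lemma cube_iff: "x \<in> cube A n \<longleftrightarrow> (\<forall>k<n. x k \<in> A) \<and> (\<forall>k. \<not> k<n \<longrightarrow> x k = undefined)"
  unfolding cube_def by (auto simp: PiE_def extensional_def)

lemma cube_upd: "x \<in> cube A n \<Longrightarrow> k<n \<Longrightarrow> a\<in>A \<Longrightarrow> x(k:=a) \<in> cube A n"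
  by (auto simp: cube_iff)

lemma finite_cube: "finite A \<Longrightarrow> finite (cube A n)"
  unfolding cube_def by (simp add: finite_PiE)

lemma cube_diff: "x \<in> cube A n \<Longrightarrow> y \<in> cube A n \<Longrightarrow> x \<noteq> y \<Longrightarrow> \<exists>k<n. x k \<noteq> y k"
  using cube_eqI by blast

lemma chain:
  assumes H: "\<And>m x y. m<n \<Longrightarrow> m \<notin> J \<Longrightarrow> x\<in>cube A n \<Longrightarrow> y \<in> cube A n \<Longrightarrow> (\<forall>l<n. l \<noteq> m \<longrightarrow> x l = y l) \<Longrightarrow> \<phi> x = \<phi> y"
  and x: "x \<in> cube A n" and y: "y \<in> cube A n" and J: "\<forall>l\<in>J. x l = y l"
  shows "\<phi> x = \<phi> y"
proof -
  define z where "z t = (\<lambda>k. if k < t then y k else x k)" for t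
  have zc: "z t \<in> cube A n" for t
    using x y by (auto simp: cube_iff z_def)
  have "t \<le> n \<Longrightarrow> \<phi> (z t) = \<phi> x" for t
  proof (induction t)
    case 0
    then show ?case by (simp add: z_def)
  next
    case (Suc t)
    have "\<phi> (z (Suc t)) = \<phi> (z t)"
    proof (cases "t \<in> J")
      case True
      then have "z (Suc t) = z t" using J by (auto simp: z_def fun_eq_iff less_Suc_eq)
      then show ?thesis by simp
    next
      case False
      show ?thesis
      proof (rule H[of t])
        show "t < n" using Suc.prems by simp
        show "t \<notin> J" by (rule False)
        show "z (Suc t) \<in> cube A n" "z t \<in> cube A n" by (rule zc)+
        show "\<forall>l<n. l \<noteq> t \<longrightarrow> z (Suc t) l = z t l" by (auto simp: z_def less_Suc_eq)
      qed
    qed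
    then show ?case using Suc by simp
  qed
  moreover have "z n = y" using x y by (auto simp: z_def fun_eq_iff cube_out)
  ultimately show ?thesis by (metis order_refl)
qed

lemma wreath_unary:
  assumes fin: "finite A" and f: "f \<in> wreath_perms A n"
  shows "f \<in> unary_perms A n"
proof -
  obtain \<pi> \<sigma> where hp: "\<pi> permutes {..<n}" and hs: "\<forall>i<n. \<sigma> i permutes A"
    and hf: "\<forall>x. f x = (if x \<in> cube A n
                   then (\<lambda>i. if i < n then \<sigma> i (x (\<pi> i)) else undefined) else x)"
    using f unfolding wreath_perms_def by blast
  have pin: "i < n \<Longrightarrow> \<pi> i < n" for i using permutes_in_image[OF hp] by simp
  have fc: "x \<in> cube A n \<Longrightarrow> i < n \<Longrightarrow> f x i = \<sigma> i (x (\<pi> i))" for x i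
    using hf by simp
  have sub: "f ` cube A n \<subseteq> cube A n"
  proof
    fix y assume "y \<in> f ` cube A n"
    then obtain x where x: "x \<in> cube A n" "y = f x" by blast
    show "y \<in> cube A n" unfolding cube_iff
    proof (intro conjI allI impI)
      fix k assume "k < n"
      then show "y k \<in> A" using x hf hs pin cube_coord[OF x(1)] permutes_in_image by fastforce
    next
      fix k assume "\<not> k < n"
      then show "y k = undefined" using x hf by simp
    qed
  qed
  have inj: "inj_on f (cube A n)"
  proof (rule inj_onI)
    fix x y assume x: "x \<in> cube A n" and y: "y \<in> cube A n" and e: "f x = f y"
    show "x = y"
    proof (rule cube_eqI[OF x y])
      fix k assume k: "k < n"
      then have "k \<in> \<pi> ` {..<n}" using permutes_image[OF hp] by simp
      then obtain i where i: "i < n" "\<pi> i = k" by auto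
      have "\<sigma> i (x k) = \<sigma> i (y k)" using fc[OF x i(1)] fc[OF y i(1)] e i by simp
      then show "x k = y k" using permutes_inj[OF hs[rule_format, OF i(1)]] by (simp add: inj_eq)
    qed
  qed
  have "f ` cube A n = cube A n" using endo_inj_surj[OF finite_cube[OF fin] sub inj] .
  then have "bij_betw f (cube A n) (cube A n)" using inj by (simp add: bij_betw_def)
  then have perm: "f permutes cube A n" by (rule bij_imp_permutes) (use hf in simp)
  show ?thesis unfolding unary_perms_def sym_cube_def
  proof (intro CollectI conjI perm allI impI)
    fix i assume i: "i < n"
    show "\<exists>j<n. \<forall>x\<in>cube A n. \<forall>y\<in>cube A n. x j = y j \<longrightarrow> f x i = f y i"
      by (rule exI[of _ "\<pi> i"]) (use i pin fc in simp)
  qed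
qed

lemma two_elems: "finite A \<Longrightarrow> card A \<ge> 2 \<Longrightarrow> a \<in> A \<Longrightarrow> \<exists>b\<in>A. b \<noteq> a"
proof (rule ccontr)
  assume fA: "finite A" and c: "card A \<ge> 2" and a: "a \<in> A" and n: "\<not> (\<exists>b\<in>A. b \<noteq> a)"
  from n have "A \<subseteq> {a}" by blast
  then have "card A \<le> card {a}" using fA by (intro card_mono) simp_all
  then show False using c by simp
qed

lemma unary_wreath:
  assumes fin: "finite A" and cA: "card A \<ge> 2" and f: "f \<in> unary_perms A n"
  shows "f \<in> wreath_perms A n"
proof -
  have perm: "f permutes cube A n" using f unfolding unary_perms_def sym_cube_def by blast
  have "\<forall>i. \<exists>j. i < n \<longrightarrow> j < n \<and> (\<forall>x\<in>cube A n. \<forall>y\<in>cube A n. x j = y j \<longrightarrow> f x i = f y i)"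
    using f unfolding unary_perms_def by blast
  from choice[OF this] obtain \<pi> where hp0: "\<forall>i. i < n \<longrightarrow> \<pi> i < n \<and> (\<forall>x\<in>cube A n. \<forall>y\<in>cube A n. x (\<pi> i) = y (\<pi> i) \<longrightarrow> f x i = f y i)"
    by blast
  then have hp: "\<forall>i<n. \<pi> i < n \<and> (\<forall>x\<in>cube A n. \<forall>y\<in>cube A n. x (\<pi> i) = y (\<pi> i) \<longrightarrow> f x i = f y i)"
    by blast
  define \<pi>' where "\<pi>' i = (if i < n then \<pi> i else i)" for i
  have fcube: "x \<in> cube A n \<Longrightarrow> f x \<in> cube A n" for x using permutes_in_image[OF perm] by simp
  have "card A \<noteq> 0" using cA by linarith
  then have nonempty: "A \<noteq> {}" by (metis card.empty)
  then obtain a0 where a0: "a0 \<in> A" by auto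
  define c where "c = (\<lambda>k. if k < n then a0 else undefined)"
  have cc: "c \<in> cube A n" using a0 by (auto simp: cube_iff c_def)
  have surjpi: "{..<n} \<subseteq> \<pi>' ` {..<n}"
  proof
    fix k assume k: "k \<in> {..<n}"
    show "k \<in> \<pi>' ` {..<n}"
    proof (rule ccontr)
      assume nk: "k \<notin> \<pi>' ` {..<n}"
      obtain b where b: "b \<in> A" "b \<noteq> c k" using two_elems[OF fin cA cube_coord[OF cc]] k by auto
      have c2: "c(k:=b) \<in> cube A n" using cube_upd[OF cc] k b by simp
      have "f c = f (c(k:=b))"
      proof (rule cube_eqI[OF fcube[OF cc] fcube[OF c2]])
        fix i assume i: "i < n"
        have "\<pi> i \<noteq> k" using nk i by (auto simp: \<pi>'_def)
        then have e: "c (\<pi> i) = (c(k:=b)) (\<pi> i)" by simp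
        have "\<forall>x\<in>cube A n. \<forall>y\<in>cube A n. x (\<pi> i) = y (\<pi> i) \<longrightarrow> f x i = f y i" using hp i by blast
        then show "f c i = f (c(k := b)) i" using cc c2 e by blast
      qed
      then have "c = c(k:=b)" using permutes_inj[OF perm] by (simp add: inj_eq)
      then have "c k = (c(k:=b)) k" by (rule arg_cong)
      then show False using b by simp
    qed
  qed
  have pimg: "\<pi>' ` {..<n} \<subseteq> {..<n}" using hp by (auto simp: \<pi>'_def)
  have injpi: "inj_on \<pi>' {..<n}" by (rule finite_surj_inj[OF _ surjpi]) simp
  have pperm: "\<pi>' permutes {..<n}"
    by (rule bij_imp_permutes) (use injpi pimg surjpi in \<open>auto simp: bij_betw_def \<pi>'_def\<close>)
  define \<sigma> where "\<sigma> i a = (if a \<in> A then f (c(\<pi> i := a)) i else a)" for i a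
  have key: "x \<in> cube A n \<Longrightarrow> i < n \<Longrightarrow> f x i = \<sigma> i (x (\<pi> i))" for x i
  proof -
    assume x: "x \<in> cube A n" and i: "i < n"
    have xa: "x (\<pi> i) \<in> A" using cube_coord[OF x] hp i by simp
    have "c(\<pi> i := x (\<pi> i)) \<in> cube A n" using cube_upd[OF cc] hp i xa by simp
    moreover have "\<forall>x\<in>cube A n. \<forall>y\<in>cube A n. x (\<pi> i) = y (\<pi> i) \<longrightarrow> f x i = f y i" using hp i by blast
    moreover have "x (\<pi> i) = (c(\<pi> i := x (\<pi> i))) (\<pi> i)" by simp
    ultimately have "f x i = f (c(\<pi> i := x (\<pi> i))) i" using x by blast
    then show ?thesis using xa by (simp add: \<sigma>_def)
  qed
  have sperm: "\<sigma> i permutes A" if i: "i < n" for i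
  proof -
    have sub: "\<sigma> i ` A \<subseteq> A"
    proof
      fix b assume "b \<in> \<sigma> i ` A"
      then obtain a where a: "a \<in> A" "b = \<sigma> i a" by auto
      have "c(\<pi> i := a) \<in> cube A n" using cube_upd[OF cc] hp i a by simp
      then have "f (c(\<pi> i := a)) i \<in> A" using fcube cube_coord i by blast
      then show "b \<in> A" using a by (simp add: \<sigma>_def)
    qed
    have sur: "A \<subseteq> \<sigma> i ` A"
    proof
      fix b assume b: "b \<in> A"
      have y: "c(i:=b) \<in> cube A n" using cube_upd[OF cc i b] .
      define x where "x = inv f (c(i:=b))"
      have x: "x \<in> cube A n" using y permutes_in_image[OF permutes_inv[OF perm]] by (simp add: x_def)
      have "f x = c(i:=b)" by (simp add: x_def permutes_inverses(1)[OF perm])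
      then have "f x i = b" by simp
      then have "\<sigma> i (x (\<pi> i)) = b" using key[OF x i] by simp
      moreover have "x (\<pi> i) \<in> A" using cube_coord[OF x] hp i by simp
      ultimately show "b \<in> \<sigma> i ` A" by blast
    qed
    have "inj_on (\<sigma> i) A" by (rule finite_surj_inj[OF fin sur])
    then have "bij_betw (\<sigma> i) A A" using sub sur by (auto simp: bij_betw_def)
    then show ?thesis by (rule bij_imp_permutes) (simp add: \<sigma>_def)
  qed
  show ?thesis unfolding wreath_perms_def
  proof (intro CollectI exI conjI allI impI)
    show "\<pi>' permutes {..<n}" by (rule pperm)
    show "\<And>i. i < n \<Longrightarrow> \<sigma> i permutes A" by (rule sperm)
    fix x
    show "f x = (if x \<in> cube A n then (\<lambda>i. if i < n then \<sigma> i (x (\<pi>' i)) else undefined) else x)"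
    proof (cases "x \<in> cube A n")
      case True
      then show ?thesis using key[OF True] cube_out[OF fcube[OF True]] by (auto simp: fun_eq_iff \<pi>'_def)
    next
      case False
      then show ?thesis using permutes_not_in[OF perm] by simp
    qed
  qed
qed

lemma wreath_norm:
  assumes fin: "finite A" and f: "f \<in> wreath_perms A n" and g: "g \<in> instructions A n"
  shows "inv f \<circ> g \<circ> f \<in> instructions A n"
proof -
  have perm: "f permutes cube A n" using wreath_unary[OF fin f] unfolding unary_perms_def sym_cube_def by blast
  obtain \<pi> \<sigma> where hp: "\<pi> permutes {..<n}" and hs: "\<forall>i<n. \<sigma> i permutes A"
    and hf: "\<forall>x. f x = (if x \<in> cube A n
                   then (\<lambda>i. if i < n then \<sigma> i (x (\<pi> i)) else undefined) else x)"
    using f unfolding wreath_perms_def by blast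
  have fc: "x \<in> cube A n \<Longrightarrow> i < n \<Longrightarrow> f x i = \<sigma> i (x (\<pi> i))" for x i
    using hf by simp
  have gp: "g permutes cube A n" using g unfolding instructions_def sym_cube_def by blast
  define Ng where "Ng = {i \<in> {..<n}. \<not> (\<forall>x \<in> cube A n. g x i = x i)}"
  have cNg: "card Ng \<le> 1" using g unfolding instructions_def Ng_def by blast
  define h where "h = inv f \<circ> g \<circ> f"
  have hperm: "h permutes cube A n" unfolding h_def
    by (intro permutes_compose perm gp permutes_inv)
  define Nh where "Nh = {i \<in> {..<n}. \<not> (\<forall>x \<in> cube A n. h x i = x i)}"
  have fh: "f (h x) = g (f x)" for x by (simp add: h_def permutes_inverses(1)[OF perm])
  have "Nh \<subseteq> \<pi> ` Ng"
  proof
    fix m assume "m \<in> Nh"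
    then obtain x where m: "m < n" and x: "x \<in> cube A n" and hx: "h x m \<noteq> x m"
      unfolding Nh_def by blast
    have "m \<in> \<pi> ` {..<n}" using permutes_image[OF hp] m by simp
    then obtain i where i: "i < n" "\<pi> i = m" by auto
    have "i \<in> Ng"
    proof (rule ccontr)
      assume "i \<notin> Ng"
      then have gi: "g (f x) i = f x i" using i permutes_in_image[OF perm] x unfolding Ng_def by blast
      have hxc: "h x \<in> cube A n" using permutes_in_image[OF hperm] x by simp
      have "\<sigma> i (h x m) = \<sigma> i (x m)"
        using fc[OF hxc i(1)] fc[OF x i(1)] fh[of x] gi i(2) by simp
      then have "h x m = x m" using permutes_inj[OF hs[rule_format, OF i(1)]] by (simp add: inj_eq)
      then show False using hx by simp
    qed
    then show "m \<in> \<pi> ` Ng" using i by blast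
  qed
  moreover have "finite Ng" unfolding Ng_def by simp
  ultimately have "card Nh \<le> card Ng" using card_mono card_image_le by (metis finite_imageI le_trans)
  then have "card Nh \<le> 1" using cNg by simp
  then show ?thesis using hperm unfolding instructions_def sym_cube_def Nh_def h_def by blast
qed

definition agree :: "((nat \<Rightarrow> 'a) \<Rightarrow> (nat \<Rightarrow> 'a)) \<Rightarrow> nat \<Rightarrow> (nat \<Rightarrow> 'a) \<Rightarrow> (nat \<Rightarrow> 'a) \<Rightarrow> nat \<Rightarrow> bool"
  where "agree f n x y k \<longleftrightarrow> (\<forall>i<n. i \<noteq> k \<longrightarrow> f x i = f y i)"

lemma transpose_coord: "a j = b j \<Longrightarrow> transpose a b w j = w j"
  unfolding transpose_def by auto

lemma card_le1_eq: "finite N \<Longrightarrow> card N \<le> 1 \<Longrightarrow> a \<in> N \<Longrightarrow> b \<in> N \<Longrightarrow> a = b"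
  using card_le_Suc0_iff_eq by (metis One_nat_def)

lemma agree_unique:
  assumes perm: "f permutes cube A n" and x: "x \<in> cube A n" and y: "y \<in> cube A n" and xy: "x \<noteq> y"
    and k: "k < n" and k': "k' < n" and a: "agree f n x y k" and a': "agree f n x y k'"
  shows "k = k'"
proof -
  have "f x \<noteq> f y" using xy permutes_inj[OF perm] by (simp add: inj_eq)
  moreover have "f x \<in> cube A n" "f y \<in> cube A n" using x y permutes_in_image[OF perm] by auto
  ultimately obtain i where i: "i < n" "f x i \<noteq> f y i" using cube_diff by blast
  then show ?thesis using a a' unfolding agree_def by metis
qed

lemma pair_lemma:
  assumes perm: "f permutes cube A n"
    and H: "\<forall>h \<in> instructions A n. f \<circ> h \<circ> inv f \<in> instructions A n"
    and m: "m < n"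
    and x: "x \<in> cube A n" and y: "y \<in> cube A n" and x': "x' \<in> cube A n" and y': "y' \<in> cube A n"
    and xy: "\<forall>l<n. l \<noteq> m \<longrightarrow> x l = y l" and xy': "\<forall>l<n. l \<noteq> m \<longrightarrow> x' l = y' l"
    and ne: "x \<noteq> y" "x' \<noteq> y'"
    and dis: "x' \<noteq> x" "x' \<noteq> y" "y' \<noteq> x" "y' \<noteq> y"
  shows "\<exists>k<n. agree f n x y k \<and> agree f n x' y' k"
proof -
  define h where "h = transpose x y \<circ> transpose x' y'"
  have hp: "h permutes cube A n" unfolding h_def
    by (intro permutes_compose permutes_swap_id x y x' y')
  have hc: "h z l = z l" if "l < n" "l \<noteq> m" for z l
  proof -
    have "x l = y l" "x' l = y' l" using xy xy' that by auto
    then show ?thesis unfolding h_def by (simp add: transpose_coord)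
  qed
  have "{i \<in> {..<n}. \<not> (\<forall>z \<in> cube A n. h z i = z i)} \<subseteq> {m}" using hc by auto
  then have "card {i \<in> {..<n}. \<not> (\<forall>z \<in> cube A n. h z i = z i)} \<le> card {m}"
    by (intro card_mono) simp_all
  then have "h \<in> instructions A n" using hp unfolding instructions_def sym_cube_def by simp
  then have gI: "f \<circ> h \<circ> inv f \<in> instructions A n" using H by blast
  define g where "g = f \<circ> h \<circ> inv f"
  define N where "N = {i \<in> {..<n}. \<not> (\<forall>z \<in> cube A n. g z i = z i)}"
  have cN: "card N \<le> 1" using gI unfolding instructions_def N_def g_def by blast
  have fN: "finite N" unfolding N_def by simp
  have hx: "h x = y" "h x' = y'" using ne dis unfolding h_def by (auto simp: transpose_def)
  have gx: "g (f x) = f y" "g (f x') = f y'" using hx by (auto simp: g_def permutes_inverses(2)[OF perm])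
  have fxc: "f x \<in> cube A n" "f x' \<in> cube A n" using x x' permutes_in_image[OF perm] by auto
  have inN1: "i \<in> N" if "i < n" "f x i \<noteq> f y i" for i
    using that fxc gx unfolding N_def by force
  have inN2: "i \<in> N" if "i < n" "f x' i \<noteq> f y' i" for i
    using that fxc gx unfolding N_def by force
  have "f x \<noteq> f y" using ne permutes_inj[OF perm] by (simp add: inj_eq)
  moreover have "f y \<in> cube A n" using y permutes_in_image[OF perm] by auto
  ultimately obtain k where k: "k < n" "f x k \<noteq> f y k" using cube_diff fxc by blast
  have kN: "k \<in> N" using inN1 k by blast
  have "agree f n x y k" unfolding agree_def using inN1 kN card_le1_eq[OF fN cN] by blast
  moreover have "agree f n x' y' k" unfolding agree_def using inN2 kN card_le1_eq[OF fN cN] by blast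
  ultimately show ?thesis using k by blast
qed

lemma direction_lemma:
  assumes fin: "finite A" and cA: "card A \<ge> 2" and n2: "n \<ge> 2"
    and perm: "f permutes cube A n"
    and H: "\<forall>h \<in> instructions A n. f \<circ> h \<circ> inv f \<in> instructions A n"
    and m: "m < n"
  shows "\<exists>k<n. \<forall>x\<in>cube A n. \<forall>y\<in>cube A n. (\<forall>l<n. l \<noteq> m \<longrightarrow> x l = y l) \<longrightarrow> agree f n x y k"
proof -
  define m' where "m' = (if m = 0 then 1 else 0::nat)"
  have m': "m' < n" "m' \<noteq> m" using n2 m by (auto simp: m'_def)
  have "card A \<noteq> 0" using cA by linarith
  then have "A \<noteq> {}" by (metis card.empty)
  then obtain a0 where a0: "a0 \<in> A" by auto
  obtain b0 where b0: "b0 \<in> A" "b0 \<noteq> a0" using two_elems[OF fin cA a0] by auto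
  define c where "c = (\<lambda>k. if k < n then a0 else undefined)"
  have cc: "c \<in> cube A n" using a0 by (auto simp: cube_iff c_def)
  define x0 where "x0 = c"
  define y0 where "y0 = c(m:=b0)"
  define u0 where "u0 = x0(m':=b0)"
  define v0 where "v0 = y0(m':=b0)"
  have x0c: "x0 \<in> cube A n" using cc by (simp add: x0_def)
  have y0c: "y0 \<in> cube A n" unfolding y0_def using cube_upd[OF cc m b0(1)] .
  have u0c: "u0 \<in> cube A n" unfolding u0_def using cube_upd[OF x0c m'(1) b0(1)] .
  have v0c: "v0 \<in> cube A n" unfolding v0_def using cube_upd[OF y0c m'(1) b0(1)] .
  have x0m': "x0 m' = a0" "y0 m' = a0" using m' by (auto simp: x0_def y0_def c_def)
  have u0m': "u0 m' = b0" "v0 m' = b0" by (auto simp: u0_def v0_def)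
  have xy0: "\<forall>l<n. l \<noteq> m \<longrightarrow> x0 l = y0 l" by (simp add: x0_def y0_def)
  have uv0: "\<forall>l<n. l \<noteq> m \<longrightarrow> u0 l = v0 l" by (simp add: u0_def v0_def x0_def y0_def)
  have ne0: "x0 \<noteq> y0" using b0 m by (auto simp: x0_def y0_def c_def fun_eq_iff)
  have neu: "u0 \<noteq> v0"
  proof
    assume "u0 = v0"
    then have "u0 m = v0 m" by simp
    then show False using b0 m m' by (auto simp: u0_def v0_def x0_def y0_def c_def)
  qed
  have dis0: "u0 \<noteq> x0" "u0 \<noteq> y0" "v0 \<noteq> x0" "v0 \<noteq> y0"
    using x0m' u0m' b0(2) by (metis)+
  obtain D0 where D0: "D0 < n" "agree f n x0 y0 D0" "agree f n u0 v0 D0"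
    using pair_lemma[OF perm H m x0c y0c u0c v0c xy0 uv0 ne0 neu dis0] by blast
  show ?thesis
  proof (intro exI[of _ D0] conjI D0(1) ballI impI)
    fix x y assume x: "x \<in> cube A n" and y: "y \<in> cube A n" and xy: "\<forall>l<n. l \<noteq> m \<longrightarrow> x l = y l"
    show "agree f n x y D0"
    proof (cases "x = y")
      case True
      then show ?thesis by (simp add: agree_def)
    next
      case ne: False
      have ym': "y m' = x m'" using xy m' by simp
      show ?thesis
      proof (cases "x m' = a0")
        case False
        have dis: "x \<noteq> x0" "x \<noteq> y0" "y \<noteq> x0" "y \<noteq> y0" using False ym' x0m' by metis+
        obtain k where k: "k < n" "agree f n x0 y0 k" "agree f n x y k"
          using pair_lemma[OF perm H m x0c y0c x y xy0 xy ne0 ne dis] by blast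
        have "k = D0" using agree_unique[OF perm x0c y0c ne0 k(1) D0(1) k(2) D0(2)] .
        then show ?thesis using k by simp
      next
        case True
        have dis: "x \<noteq> u0" "x \<noteq> v0" "y \<noteq> u0" "y \<noteq> v0" using True ym' u0m' b0(2) by metis+
        obtain k where k: "k < n" "agree f n u0 v0 k" "agree f n x y k"
          using pair_lemma[OF perm H m u0c v0c x y uv0 xy neu ne dis] by blast
        have "k = D0" using agree_unique[OF perm u0c v0c neu k(1) D0(1) k(2) D0(3)] .
        then show ?thesis using k by simp
      qed
    qed
  qed
qed

lemma norm_unary:
  assumes fin: "finite A" and cA: "card A \<ge> 2" and n2: "n \<ge> 2"
    and fs: "f \<in> sym_cube A n"
    and H0: "\<forall>g \<in> instructions A n. inv f \<circ> g \<circ> f \<in> instructions A n"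
  shows "f \<in> unary_perms A n"
proof -
  have perm: "f permutes cube A n" using fs unfolding sym_cube_def by simp
  define I where "I = instructions A n"
  define cj where "cj g = inv f \<circ> g \<circ> f" for g :: "(nat \<Rightarrow> 'a) \<Rightarrow> (nat \<Rightarrow> 'a)"
  have cjback: "f \<circ> cj g \<circ> inv f = g" for g
  proof -
    have "f \<circ> cj g \<circ> inv f = (f \<circ> inv f) \<circ> g \<circ> (f \<circ> inv f)" by (simp add: cj_def o_assoc)
    then show ?thesis by (simp add: permutes_inv_o(1)[OF perm])
  qed
  have finI: "finite I" unfolding I_def instructions_def sym_cube_def
    using finite_permutations[OF finite_cube[OF fin]] by (rule finite_subset[rotated]) auto
  have sub: "cj ` I \<subseteq> I" using H0 by (auto simp: I_def cj_def)
  have inj: "inj_on cj I" by (rule inj_onI) (metis cjback)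
  have eq: "cj ` I = I" by (rule endo_inj_surj[OF finI sub inj])
  have H: "\<forall>h \<in> instructions A n. f \<circ> h \<circ> inv f \<in> instructions A n"
  proof
    fix h assume "h \<in> instructions A n"
    then have "h \<in> cj ` I" using eq by (simp add: I_def)
    then obtain g where "g \<in> I" "h = cj g" by auto
    then show "f \<circ> h \<circ> inv f \<in> instructions A n" using cjback by (simp add: I_def)
  qed
  have "\<forall>m. \<exists>k. m < n \<longrightarrow> k < n \<and> (\<forall>x\<in>cube A n. \<forall>y\<in>cube A n. (\<forall>l<n. l \<noteq> m \<longrightarrow> x l = y l) \<longrightarrow> agree f n x y k)"
    using direction_lemma[OF fin cA n2 perm H] by blast
  from choice[OF this] obtain \<rho> where r0: "\<forall>m. m < n \<longrightarrow> \<rho> m < n \<and> (\<forall>x\<in>cube A n. \<forall>y\<in>cube A n. (\<forall>l<n. l \<noteq> m \<longrightarrow> x l = y l) \<longrightarrow> agree f n x y (\<rho> m))"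
    by blast
  have rl: "\<rho> m < n" if "m < n" for m using r0 that by blast
  have ra: "f x i = f y i" if "m < n" "x \<in> cube A n" "y \<in> cube A n" "\<forall>l<n. l \<noteq> m \<longrightarrow> x l = y l" "i < n" "i \<noteq> \<rho> m" for m x y i
  proof -
    have "agree f n x y (\<rho> m)" using r0 that by blast
    then show ?thesis using that unfolding agree_def by blast
  qed
  have "card A \<noteq> 0" using cA by linarith
  then have "A \<noteq> {}" by (metis card.empty)
  then obtain a0 where a0: "a0 \<in> A" by auto
  obtain b0 where b0: "b0 \<in> A" "b0 \<noteq> a0" using two_elems[OF fin cA a0] by auto
  define c where "c = (\<lambda>k. if k < n then a0 else undefined)"
  have cc: "c \<in> cube A n" using a0 by (auto simp: cube_iff c_def)
  have surj: "{..<n} \<subseteq> \<rho> ` {..<n}"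
  proof
    fix k assume k: "k \<in> {..<n}"
    show "k \<in> \<rho> ` {..<n}"
    proof (rule ccontr)
      assume nk: "k \<notin> \<rho> ` {..<n}"
      have const: "f x k = f y k" if "x \<in> cube A n" "y \<in> cube A n" for x y
      proof (rule chain[where J="{}" and \<phi>="\<lambda>x. f x k"])
        fix m x y assume "m < n" "x \<in> cube A n" "y \<in> cube A n" "\<forall>l<n. l \<noteq> m \<longrightarrow> x l = y l"
        moreover have "k \<noteq> \<rho> m" using nk \<open>m < n\<close> by auto
        ultimately show "f x k = f y k" using ra k by blast
      qed (use that in auto)
      have y1: "c(k:=a0) \<in> cube A n" "c(k:=b0) \<in> cube A n" using cube_upd[OF cc] k a0 b0 by auto
      have ic: "inv f z \<in> cube A n" if "z \<in> cube A n" for z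
        using that permutes_in_image[OF permutes_inv[OF perm]] by simp
      have "f (inv f (c(k:=a0))) k = f (inv f (c(k:=b0))) k" using const ic y1 by blast
      then have "a0 = b0" by (simp add: permutes_inverses(1)[OF perm])
      then show False using b0 by simp
    qed
  qed
  have injr: "inj_on \<rho> {..<n}" by (rule finite_surj_inj[OF _ surj]) simp
  show ?thesis unfolding unary_perms_def
  proof (intro CollectI conjI fs allI impI)
    fix i assume i: "i < n"
    then obtain j where j: "j < n" "\<rho> j = i" using surj by force
    show "\<exists>j<n. \<forall>x\<in>cube A n. \<forall>y\<in>cube A n. x j = y j \<longrightarrow> f x i = f y i"
    proof (intro exI[of _ j] conjI j(1) ballI impI)
      fix x y assume x: "x \<in> cube A n" and y: "y \<in> cube A n" and xy: "x j = y j"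
      show "f x i = f y i"
      proof (rule chain[where J="{j}" and \<phi>="\<lambda>x. f x i", OF _ x y])
        fix m x y assume m: "m < n" "m \<notin> {j}" and xy: "x \<in> cube A n" "y \<in> cube A n" "\<forall>l<n. l \<noteq> m \<longrightarrow> x l = y l"
        have "\<rho> m \<noteq> \<rho> j" using injr m j by (auto simp: inj_on_def)
        then show "f x i = f y i" using ra[OF m(1) xy i] j by simp
      qed (use xy in simp)
    qed
  qed
qed

theorem proposition1:
  fixes A :: "'a set" and n :: nat
  assumes "finite A" and "card A \<ge> 2" and "n \<ge> 2"
  shows "{f \<in> sym_cube A n. \<forall>g \<in> instructions A n. inv f \<circ> g \<circ> f \<in> instructions A n}
           = unary_perms A n
         \<and> unary_perms A n = wreath_perms A n"
proof -
  have UW: "unary_perms A n = wreath_perms A n"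
    using wreath_unary[OF assms(1)] unary_wreath[OF assms(1,2)] by blast
  have "{f \<in> sym_cube A n. \<forall>g \<in> instructions A n. inv f \<circ> g \<circ> f \<in> instructions A n} \<subseteq> unary_perms A n"
    using norm_unary[OF assms] by blast
  moreover have "unary_perms A n \<subseteq> {f \<in> sym_cube A n. \<forall>g \<in> instructions A n. inv f \<circ> g \<circ> f \<in> instructions A n}"
  proof
    fix f assume f: "f \<in> unary_perms A n"
    then have "f \<in> sym_cube A n" unfolding unary_perms_def by blast
    moreover have "f \<in> wreath_perms A n" using f UW by simp
    ultimately show "f \<in> {f \<in> sym_cube A n. \<forall>g \<in> instructions A n. inv f \<circ> g \<circ> f \<in> instructions A n}"
      using wreath_norm[OF assms(1)] by blast
  qed
  ultimately show ?thesis using UW by blast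
qed


thm_deps proposition1

end
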